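(* Let $n\ge1$, $1\le M\le 2^{n-1}$, $a:=M/2^n$, and let $f:\{-1,1\}^n\to\{-1,1\}$ satisfy $|f^{-1}(1)|=M$. For every even $m$ with $2\le m\le n$, $\mathbf{W}_m\le 4a(1-a)$. For every odd $m$ with $3\le m\le n$, $\mathbf{W}_m\le 2a$.
   Context: For $f:\{-1,1\}^n\to\{-1,1\}$ and $S\subseteq[1:n]$, the Fourier coefficient is $\hat f_S:=\mathbb{E}_{\mathbf{x}\sim\mathrm{Unif}\{-1,1\}^n}[f(\mathbf{x})\prod_{i\in S}x_i]$, and the degree-$m$ Fourier weight is $\mathbf{W}_m:=\sum_{S:|S|=m}\hat f_S^{2}$. *)

theory Defs
  imports "HOL-Analysis.Analysis"
begin

text \<open>The Boolean cube {-1,1}^n, coordinates indexed by 0..n-1 (the paper's 1..n),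
  points represented as functions nat => real that vanish outside {0..<n}.\<close>
definition cube :: "nat \<Rightarrow> (nat \<Rightarrow> real) set" where
  "cube n = {x. (\<forall>i<n. x i = -1 \<or> x i = 1) \<and> (\<forall>i\<ge>n. x i = 0)}"

definition fourier_coeff :: "nat \<Rightarrow> ((nat \<Rightarrow> real) \<Rightarrow> real) \<Rightarrow> nat set \<Rightarrow> real" where
  "fourier_coeff n f S = (\<Sum>x\<in>cube n. f x * (\<Prod>i\<in>S. x i)) / 2 ^ n"

definition fourier_weight :: "nat \<Rightarrow> ((nat \<Rightarrow> real) \<Rightarrow> real) \<Rightarrow> nat \<Rightarrow> real" where
  "fourier_weight n f m = (\<Sum>S\<in>{S. S \<subseteq> {0..<n} \<and> card S = m}. (fourier_coeff n f S)^2)"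

end

theory Submission
  imports Defs
begin

definition emb :: "nat \<Rightarrow> nat set \<Rightarrow> nat \<Rightarrow> real" where
  "emb n B = (\<lambda>i. if i \<in> B then 1 else if i < n then -1 else 0)"

lemma cube_bij: "bij_betw (emb n) (Pow {0..<n}) (cube n)"
proof (rule bij_betw_imageI)
  show "inj_on (emb n) (Pow {0..<n})"
  proof (rule inj_onI)
    fix A B assume "A \<in> Pow {0..<n}" "B \<in> Pow {0..<n}" "emb n A = emb n B"
    hence "\<forall>i. (emb n A i = 1) = (emb n B i = 1)" by simp
    thus "A = B" unfolding emb_def by (auto split: if_splits)
  qed
  show "emb n ` Pow {0..<n} = cube n"
  proof
    show "emb n ` Pow {0..<n} \<subseteq> cube n" unfolding emb_def cube_def by auto
    show "cube n \<subseteq> emb n ` Pow {0..<n}"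
    proof
      fix x assume x: "x \<in> cube n"
      have "x = emb n {i. i < n \<and> x i = 1}"
        using x unfolding emb_def cube_def by (auto intro!: ext)
      moreover have "{i. i < n \<and> x i = 1} \<in> Pow {0..<n}" by auto
      ultimately show "x \<in> emb n ` Pow {0..<n}" by blast
    qed
  qed
qed

lemma cube_finite: "finite (cube n)"
  using bij_betw_finite[OF cube_bij] by simp

lemma cube_card: "card (cube n) = 2 ^ n"
  using bij_betw_same_card[OF cube_bij] by (simp add: card_Pow)

lemma flip_in: "i < n \<Longrightarrow> x \<in> cube n \<Longrightarrow> x(i := - x i) \<in> cube n"
  unfolding cube_def by auto

lemma flip_sum:
  assumes "i < n"
  shows "sum g (cube n) = sum (\<lambda>x. g (x(i := - x i))) (cube n)"
  by (rule sum.reindex_bij_witness[where i="\<lambda>x. x(i := - x i)" and j="\<lambda>x. x(i := - x i)"])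
     (auto simp: flip_in assms)

lemma prod_flip_in:
  fixes x :: "nat \<Rightarrow> real"
  assumes "finite S" "i \<in> S"
  shows "prod (x(i := - x i)) S = - prod x S"
proof -
  have 1: "prod (x(i := - x i)) S = (x(i := - x i)) i * prod (x(i := - x i)) (S - {i})"
    by (rule prod.remove[OF assms])
  have 2: "prod (x(i := - x i)) (S - {i}) = prod x (S - {i})"
    by (rule prod.cong) auto
  have 3: "prod x S = x i * prod x (S - {i})"
    by (rule prod.remove[OF assms])
  show ?thesis unfolding 1 2 3 by simp
qed

lemma prod_flip_out:
  fixes x :: "nat \<Rightarrow> real"
  assumes "i \<notin> S"
  shows "prod (x(i := - x i)) S = prod x S"
  by (rule prod.cong) (use assms in auto)

lemma chi_orth:
  assumes "S \<subseteq> {0..<n}" "T \<subseteq> {0..<n}"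
  shows "(\<Sum>x\<in>cube n. prod x S * prod x T) = (if S = T then 2 ^ n else 0)"
proof (cases "S = T")
  case True
  have "(\<Sum>x\<in>cube n. prod x S * prod x T) = (\<Sum>x\<in>cube n. 1)"
  proof (rule sum.cong)
    fix x assume x: "x \<in> cube n"
    have "prod x S * prod x T = prod (\<lambda>i. x i * x i) S"
      using True by (simp add: prod.distrib)
    also have "\<dots> = prod (\<lambda>i. 1) S"
    proof (rule prod.cong)
      fix j assume "j \<in> S"
      hence "j < n" using assms by auto
      hence "x j = -1 \<or> x j = 1" using x by (auto simp: cube_def)
      thus "x j * x j = 1" by auto
    qed simp
    finally show "prod x S * prod x T = 1" by simp
  qed simp
  thus ?thesis using True cube_card by simp
next
  case False
  have fS: "finite S" "finite T" using assms finite_subset by auto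
  obtain i where i: "(i \<in> S \<and> i \<notin> T) \<or> (i \<in> T \<and> i \<notin> S)"
    using False by blast
  have "i < n" using i assms by auto
  let ?h = "\<lambda>x. prod x S * prod x T"
  have "sum ?h (cube n) = sum (\<lambda>x. ?h (x(i := - x i))) (cube n)"
    by (rule flip_sum[OF \<open>i < n\<close>])
  also have "\<dots> = sum (\<lambda>x. - ?h x) (cube n)"
  proof (rule sum.cong[OF refl])
    fix x :: "nat \<Rightarrow> real"
    show "?h (x(i := - x i)) = - ?h x"
      using i prod_flip_in[OF fS(1), of i x] prod_flip_in[OF fS(2), of i x]
        prod_flip_out[of i S x] prod_flip_out[of i T x] by auto
  qed
  finally have "sum ?h (cube n) = 0" by (simp add: sum_negf)
  thus ?thesis using False by simp
qed

lemma bessel: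
  assumes F: "F \<subseteq> {S. S \<subseteq> {0..<n}}"
  shows "(\<Sum>S\<in>F. (fourier_coeff n g S)^2) \<le> (\<Sum>x\<in>cube n. (g x)^2) / 2 ^ n"
proof -
  define N :: real where "N = 2 ^ n"
  define c where "c = (\<lambda>S. fourier_coeff n g S)"
  have Npos: "N > 0" unfolding N_def by simp
  have finF: "finite F"
    by (rule finite_subset[of F "Pow {0..<n}"]) (use F in auto)
  have gc: "(\<Sum>x\<in>cube n. g x * prod x S) = N * c S" for S
    unfolding c_def fourier_coeff_def N_def by simp
  have "0 \<le> (\<Sum>x\<in>cube n. (g x - (\<Sum>S\<in>F. c S * prod x S))^2)"
    by (simp add: sum_nonneg)
  also have "\<dots> = (\<Sum>x\<in>cube n. (g x)^2) - 2 * (\<Sum>x\<in>cube n. g x * (\<Sum>S\<in>F. c S * prod x S))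
      + (\<Sum>x\<in>cube n. (\<Sum>S\<in>F. c S * prod x S) * (\<Sum>T\<in>F. c T * prod x T))"
    by (simp add: power2_eq_square algebra_simps sum.distrib sum_subtractf sum_distrib_left)
  also have "(\<Sum>x\<in>cube n. g x * (\<Sum>S\<in>F. c S * prod x S)) = (\<Sum>S\<in>F. c S * (N * c S))"
  proof -
    have "(\<Sum>x\<in>cube n. g x * (\<Sum>S\<in>F. c S * prod x S))
        = (\<Sum>x\<in>cube n. \<Sum>S\<in>F. c S * (g x * prod x S))"
      by (simp add: sum_distrib_left algebra_simps)
    also have "\<dots> = (\<Sum>S\<in>F. c S * (\<Sum>x\<in>cube n. g x * prod x S))"
      by (subst sum.swap) (simp add: sum_distrib_left)
    finally show ?thesis by (simp add: gc)
  qed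
  also have "(\<Sum>x\<in>cube n. (\<Sum>S\<in>F. c S * prod x S) * (\<Sum>T\<in>F. c T * prod x T))
      = (\<Sum>S\<in>F. c S * (N * c S))"
  proof -
    have "(\<Sum>x\<in>cube n. (\<Sum>S\<in>F. c S * prod x S) * (\<Sum>T\<in>F. c T * prod x T))
        = (\<Sum>x\<in>cube n. \<Sum>S\<in>F. \<Sum>T\<in>F. c S * c T * (prod x S * prod x T))"
      by (simp add: sum_product algebra_simps)
    also have "\<dots> = (\<Sum>S\<in>F. \<Sum>T\<in>F. c S * c T * (\<Sum>x\<in>cube n. prod x S * prod x T))"
      by (subst sum.swap) (simp add: sum.swap[of _ F "cube n"] sum_distrib_left)
    also have "\<dots> = (\<Sum>S\<in>F. \<Sum>T\<in>F. c S * c T * (if S = T then N else 0))"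
    proof (intro sum.cong refl)
      fix S T assume "S \<in> F" "T \<in> F"
      hence "S \<subseteq> {0..<n}" "T \<subseteq> {0..<n}" using F by auto
      thus "c S * c T * (\<Sum>x\<in>cube n. prod x S * prod x T) = c S * c T * (if S = T then N else 0)"
        by (simp add: chi_orth N_def)
    qed
    also have "\<dots> = (\<Sum>S\<in>F. c S * (N * c S))"
      by (simp add: finF if_distrib mult_ac cong: if_cong)
    finally show ?thesis .
  qed
  finally have A: "0 \<le> (\<Sum>x\<in>cube n. (g x)^2) - 2 * (\<Sum>S\<in>F. c S * (N * c S)) + (\<Sum>S\<in>F. c S * (N * c S))" .
  have B: "(\<Sum>S\<in>F. c S * (N * c S)) = N * (\<Sum>S\<in>F. c S ^ 2)"
    by (simp add: sum_distrib_left power2_eq_square mult_ac)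
  have "N * (\<Sum>S\<in>F. c S ^ 2) \<le> (\<Sum>x\<in>cube n. (g x)^2)"
    using A B by linarith
  thus ?thesis using Npos unfolding c_def N_def[symmetric]
    by (simp add: field_simps)
qed

lemma neg_in: "x \<in> cube n \<Longrightarrow> (\<lambda>i. - x i) \<in> cube n"
  unfolding cube_def by auto

lemma neg_sum: "sum g (cube n) = sum (\<lambda>x. g (\<lambda>i. - x i)) (cube n)"
  by (rule sum.reindex_bij_witness[where i="\<lambda>x i. - x i" and j="\<lambda>x i. - x i"])
     (auto simp: neg_in)

lemma prod_neg: "prod (\<lambda>i. - (x::nat\<Rightarrow>real) i) S = (-1) ^ card S * prod x S"
proof -
  have "prod (\<lambda>i. - x i) S = prod (\<lambda>i. (-1) * x i) S" by simp
  also have "\<dots> = (-1) ^ card S * prod x S" by (subst prod.distrib) simp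
  finally show ?thesis .
qed

theorem theorem3:
  fixes n M :: nat and f :: "(nat \<Rightarrow> real) \<Rightarrow> real"
  assumes "n \<ge> 1"
    and "1 \<le> M" and "M \<le> 2 ^ (n - 1)"
    and "\<forall>x\<in>cube n. f x = -1 \<or> f x = 1"
    and "card {x\<in>cube n. f x = 1} = M"
  shows "(\<forall>m. even m \<and> 2 \<le> m \<and> m \<le> n \<longrightarrow>
            fourier_weight n f m \<le> 4 * (real M / 2 ^ n) * (1 - real M / 2 ^ n))
       \<and> (\<forall>m. odd m \<and> 3 \<le> m \<and> m \<le> n \<longrightarrow>
            fourier_weight n f m \<le> 2 * (real M / 2 ^ n))"
proof -
  define N :: real where "N = 2 ^ n"
  have Npos: "N > 0" unfolding N_def by simp
  have fpm: "f x = -1 \<or> f x = 1" if "x \<in> cube n" for x using assms(4) that by auto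
  have "(\<Sum>x\<in>cube n. f x) = (\<Sum>x\<in>cube n. 2 * (if f x = 1 then 1 else 0) - 1)"
    by (rule sum.cong) (use fpm in auto)
  also have "\<dots> = 2 * (\<Sum>x\<in>cube n. (if f x = 1 then 1 else 0)) - N"
    by (simp add: sum_subtractf sum_distrib_left cube_card N_def)
  also have "(\<Sum>x\<in>cube n. (if f x = 1 then 1 else 0)) = real M"
    using sum.inter_filter[OF cube_finite[of n], where g="\<lambda>_. (1::real)" and P="\<lambda>x. f x = 1"] assms(5)
    by simp
  finally have sumf: "(\<Sum>x\<in>cube n. f x) = 2 * real M - N" .
  have sumf2: "(\<Sum>x\<in>cube n. (f x)^2) = N"
  proof -
    have "(\<Sum>x\<in>cube n. (f x)^2) = (\<Sum>x\<in>cube n. 1)"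
    proof (rule sum.cong[OF refl])
      fix x assume "x \<in> cube n"
      hence "f x = -1 \<or> f x = 1" by (rule fpm)
      thus "(f x)^2 = 1" by auto
    qed
    thus ?thesis by (simp add: cube_card N_def)
  qed
  have part1: "fourier_weight n f m \<le> 4 * (real M / N) * (1 - real M / N)"
    if m: "even m" "2 \<le> m" "m \<le> n" for m
  proof -
    define F where "F = {S. S \<subseteq> {0..<n} \<and> card S = m}"
    have finF: "finite F"
      unfolding F_def by (rule finite_subset[of _ "Pow {0..<n}"]) auto
    have notin: "{} \<notin> F" using m unfolding F_def by auto
    have "(\<Sum>S\<in>insert {} F. (fourier_coeff n f S)^2) \<le> (\<Sum>x\<in>cube n. (f x)^2) / 2 ^ n"
      by (rule bessel) (auto simp: F_def)
    hence "(fourier_coeff n f {})^2 + fourier_weight n f m \<le> 1"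
      using finF notin sumf2 Npos unfolding fourier_weight_def F_def[symmetric] N_def
      by simp
    moreover have "fourier_coeff n f {} = 2 * (real M / N) - 1"
      unfolding fourier_coeff_def using sumf Npos by (simp add: N_def[symmetric] field_simps)
    ultimately have "fourier_weight n f m \<le> 1 - (2 * (real M / N) - 1)^2" by (simp add: algebra_simps)
    also have "\<dots> = 4 * (real M / N) * (1 - real M / N)"
    proof -
      have "1 - (2 * a - 1)^2 = 4 * a * (1 - a)" for a :: real
        by (simp add: power2_eq_square algebra_simps)
      thus ?thesis .
    qed
    finally show ?thesis .
  qed
  have part2: "fourier_weight n f m \<le> 2 * (real M / N)"
    if m: "odd m" for m
  proof -
    define F where "F = {S. S \<subseteq> {0..<n} \<and> card S = m}"
    define g where "g = (\<lambda>x. (f x - f (\<lambda>i. - x i)) / 2)"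
    have coeq: "fourier_coeff n g S = fourier_coeff n f S" if "S \<in> F" for S
    proof -
      have oddS: "odd (card S)" using that m by (simp add: F_def)
      have "(\<Sum>x\<in>cube n. f (\<lambda>i. - x i) * prod x S)
          = (\<Sum>x\<in>cube n. f (\<lambda>i. - (- x i)) * prod (\<lambda>i. - x i) S)"
        by (rule neg_sum)
      also have "\<dots> = - (\<Sum>x\<in>cube n. f x * prod x S)"
        using oddS by (simp add: prod_neg sum_negf)
      finally have "(\<Sum>x\<in>cube n. f (\<lambda>i. - x i) * prod x S) = - (\<Sum>x\<in>cube n. f x * prod x S)" .
      moreover have "(\<Sum>x\<in>cube n. g x * prod x S) = ((\<Sum>x\<in>cube n. f x * prod x S)
          - (\<Sum>x\<in>cube n. f (\<lambda>i. - x i) * prod x S)) / 2"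
        unfolding g_def by (simp add: sum_subtractf sum_divide_distrib[symmetric] algebra_simps)
      ultimately have "(\<Sum>x\<in>cube n. g x * prod x S) = (\<Sum>x\<in>cube n. f x * prod x S)" by simp
      thus ?thesis unfolding fourier_coeff_def by simp
    qed
    have "fourier_weight n f m = (\<Sum>S\<in>F. (fourier_coeff n g S)^2)"
      unfolding fourier_weight_def F_def[symmetric] using coeq by simp
    also have "\<dots> \<le> (\<Sum>x\<in>cube n. (g x)^2) / 2 ^ n"
      by (rule bessel) (auto simp: F_def)
    also have "(\<Sum>x\<in>cube n. (g x)^2) \<le> (\<Sum>x\<in>cube n. (f x + 1) / 2 + (f (\<lambda>i. - x i) + 1) / 2)"
    proof (rule sum_mono)
      fix x assume x: "x \<in> cube n"
      have "f x = -1 \<or> f x = 1" "f (\<lambda>i. - x i) = -1 \<or> f (\<lambda>i. - x i) = 1"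
        using fpm x neg_in by auto
      thus "(g x)^2 \<le> (f x + 1) / 2 + (f (\<lambda>i. - x i) + 1) / 2"
        unfolding g_def by (auto simp: power2_eq_square)
    qed
    also have "\<dots> = (\<Sum>x\<in>cube n. (f x + 1) / 2) + (\<Sum>x\<in>cube n. (f (\<lambda>i. - x i) + 1) / 2)"
      by (rule sum.distrib)
    also have "(\<Sum>x\<in>cube n. (f (\<lambda>i. - x i) + 1) / 2) = (\<Sum>x\<in>cube n. (f x + 1) / 2)"
      by (rule neg_sum[symmetric])
    also have "(\<Sum>x\<in>cube n. (f x + 1) / 2) = real M"
      using sumf by (simp add: sum.distrib sum_divide_distrib[symmetric] cube_card N_def)
    finally show ?thesis using Npos by (simp add: N_def divide_right_mono)
  qed
  show ?thesis using part1 part2 unfolding N_def by auto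
qed

end
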